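(* Let $\mathscr{D}$ be a finite Borel partition of $\mathbb{R}^d$ with respect to $\mu$, and suppose $y_i(D)\ge0$ satisfy $p_i\mu(S_i^{-1}D)\le y_i(D)$ for every $i\in\{1,\ldots,\ell\}$ and $D\in\mathscr{D}$. Then $H_m(\mathcal{P}\mid\pi^{-1}\mathscr{D})\le\sum_{D\in\mathscr{D}}f(y_1(D),\ldots,y_\ell(D))$, and hence also $H_m(\mathcal{P}\mid\pi^{-1}\mathcal{B}(\mathbb{R}^d))\le\sum_{D\in\mathscr{D}}f(y_1(D),\ldots,y_\ell(D))$.
   Context: $\{S_i\}_{i=1}^\ell$ is an IFS of contracting maps on $\mathbb{R}^d$; $\Sigma=\{1,\ldots,\ell\}^{\mathbb{N}}$; $\pi(x)=\lim_{n}S_{x_1}\circ\cdots\circ S_{x_n}(0)$; $m$ is the Bernoulli product measure with weights $p_i>0$, $\sum p_i=1$; $\mu=m\circ\pi^{-1}$; $\mathcal{P}=\{[i]\}_{i=1}^\ell$, $[i]=\{x:x_1=i\}$; $\mathcal{B}(\mathbb{R}^d)$ is the Borel $\sigma$-algebra; $H_m(\cdot\mid\cdot)$ is conditional entropy. A finite Borel partition w.r.t. $\mu$ is a finite family of Borel sets of full $\mu$-measure with pairwise $\mu$-null intersections. $\varphi(x)=-x\log x$, $\varphi(0)=0$; $f(x_1,\ldots,x_\ell)=(\sum_jx_j)\sum_i\varphi(x_i/\sum_jx_j)$, $f(0,\ldots,0)=0$. *)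

theory Defs
  imports "HOL-Probability.Probability"
begin

definition phi :: "real \<Rightarrow> real" where
  "phi x = (if x = 0 then 0 else - x * ln x)"

definition fent :: "nat \<Rightarrow> (nat \<Rightarrow> real) \<Rightarrow> real" where
  "fent l x = (let s = (\<Sum>j\<in>{1..l}. x j) in
      if (\<forall>i\<in>{1..l}. x i = 0) then 0 else s * (\<Sum>i\<in>{1..l}. phi (x i / s)))"

definition contraction :: "('a::metric_space \<Rightarrow> 'a) \<Rightarrow> bool" where
  "contraction g \<longleftrightarrow> (\<exists>r. 0 \<le> r \<and> r < 1 \<and> (\<forall>x y. dist (g x) (g y) \<le> r * dist x y))"

text \<open>S_{x_1} o ... o S_{x_n}; sequences are indexed from 0, so x_1 is x 0.\<close>
fun word_comp :: "(nat \<Rightarrow> 'a \<Rightarrow> 'a) \<Rightarrow> (nat \<Rightarrow> nat) \<Rightarrow> nat \<Rightarrow> 'a \<Rightarrow> 'a" where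
  "word_comp S x 0 = id"
| "word_comp S x (Suc n) = word_comp S x n \<circ> S (x n)"

definition coding :: "(nat \<Rightarrow> 'a::real_normed_vector \<Rightarrow> 'a) \<Rightarrow> (nat \<Rightarrow> nat) \<Rightarrow> 'a" where
  "coding S x = lim (\<lambda>n. word_comp S x n 0)"

definition letter_measure :: "nat \<Rightarrow> (nat \<Rightarrow> real) \<Rightarrow> nat measure" where
  "letter_measure l p = point_measure {1..l} (\<lambda>i. ennreal (p i))"

definition bernoulli_measure :: "nat \<Rightarrow> (nat \<Rightarrow> real) \<Rightarrow> (nat \<Rightarrow> nat) measure" where
  "bernoulli_measure l p = PiM UNIV (\<lambda>_::nat. letter_measure l p)"

definition cyl :: "nat \<Rightarrow> nat \<Rightarrow> (nat \<Rightarrow> nat) set" where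
  "cyl l i = {x \<in> PiE UNIV (\<lambda>_. {1..l}). x 0 = i}"

definition ifs_measure :: "nat \<Rightarrow> (nat \<Rightarrow> real) \<Rightarrow> (nat \<Rightarrow> 'a::euclidean_space \<Rightarrow> 'a) \<Rightarrow> 'a measure" where
  "ifs_measure l p S = distr (bernoulli_measure l p) borel (coding S)"

definition cond_entropy :: "'b measure \<Rightarrow> 'b set set \<Rightarrow> 'b measure \<Rightarrow> real" where
  "cond_entropy M P F = (\<Sum>A\<in>P. \<integral>x. phi (real_cond_exp M F (indicator A) x) \<partial>M)"

definition finite_borel_partition :: "'a::topological_space measure \<Rightarrow> 'a set set \<Rightarrow> bool" where
  "finite_borel_partition mu DD \<longleftrightarrow> finite DD \<and> DD \<subseteq> sets borel
     \<and> measure mu (space mu - \<Union>DD) = 0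
     \<and> (\<forall>D\<in>DD. \<forall>E\<in>DD. D \<noteq> E \<longrightarrow> measure mu (D \<inter> E) = 0)"

end

theory Submission
  imports Defs
begin


locale ifs =
  fixes l :: nat and p :: "nat \<Rightarrow> real" and S :: "nat \<Rightarrow> 'a::euclidean_space \<Rightarrow> 'a"
  assumes contr: "\<And>i. i \<in> {1..l} \<Longrightarrow> contraction (S i)"
    and p_pos: "\<And>i. i \<in> {1..l} \<Longrightarrow> p i > 0"
    and p_sum: "(\<Sum>i\<in>{1..l}. p i) = 1"
begin

abbreviation "L \<equiv> letter_measure l p"
abbreviation "M \<equiv> bernoulli_measure l p"
abbreviation "cod \<equiv> coding S"

lemma space_L[simp]: "space L = {1..l}"
  by (simp add: letter_measure_def space_point_measure)
lemma sets_L[simp]: "sets L = Pow {1..l}"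
  by (simp add: letter_measure_def sets_point_measure)

lemma prob_L: "prob_space L"
proof
  have "emeasure L {1..l} = (\<Sum>i\<in>{1..l}. ennreal (p i))"
    unfolding letter_measure_def by (rule emeasure_point_measure_finite) auto
  also have "\<dots> = ennreal (\<Sum>i\<in>{1..l}. p i)"
    using p_pos by (intro sum_ennreal) (auto intro: less_imp_le)
  finally show "emeasure L (space L) = 1" using p_sum by simp
qed

lemma p_nonneg: "1 \<le> i \<Longrightarrow> i \<le> l \<Longrightarrow> 0 \<le> p i"
  using p_pos[of i] by auto

lemma M_def': "M = (\<Pi>\<^sub>M i\<in>UNIV. L)" by (simp add: bernoulli_measure_def)

sublocale seq: sequence_space L
  by (simp add: sequence_space_def product_prob_space_def product_prob_space_axioms_def
       product_sigma_finite_def prob_L prob_space_imp_sigma_finite)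

lemma space_M: "space M = PiE UNIV (\<lambda>_. {1..l})"
  by (simp add: bernoulli_measure_def space_PiM)

lemma prob_M: "prob_space M" unfolding M_def' by (rule seq.P.prob_space_axioms)

lemma ratio: "\<exists>r. 0 \<le> r \<and> r < 1 \<and> (\<forall>i\<in>{1..l}. \<forall>x y. dist (S i x) (S i y) \<le> r * dist x y)"
proof -
  have "\<forall>i\<in>{1..l}. \<exists>r. 0 \<le> r \<and> r < 1 \<and> (\<forall>x y. dist (S i x) (S i y) \<le> r * dist x y)"
    using contr unfolding contraction_def by blast
  then obtain rr where rr: "\<And>i. i\<in>{1..l} \<Longrightarrow> 0 \<le> rr i \<and> rr i < 1 \<and> (\<forall>x y. dist (S i x) (S i y) \<le> rr i * dist x y)"
    by metis
  have ne: "{1..l} \<noteq> {}" using p_sum by (metis sum.empty zero_neq_one)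
  define r where "r = Max (rr ` {1..l})"
  have "r \<in> rr ` {1..l}" unfolding r_def using ne by (intro Max_in) auto
  then have r1: "0 \<le> r \<and> r < 1" using rr by auto
  have "\<And>i. i \<in> {1..l} \<Longrightarrow> rr i \<le> r" unfolding r_def by (intro Max_ge) auto
  then have "\<forall>i\<in>{1..l}. \<forall>x y. dist (S i x) (S i y) \<le> r * dist x y"
    using rr by (meson dual_order.trans mult_right_mono zero_le_dist)
  then show ?thesis using r1 by blast
qed

lemma S_cont: "i \<in> {1..l} \<Longrightarrow> continuous_on UNIV (S i)"
proof -
  assume i: "i \<in> {1..l}"
  obtain r where r: "0 \<le> r" "\<forall>x y. dist (S i x) (S i y) \<le> r * dist x y"
    using contr[OF i] unfolding contraction_def by blast
  have "r-lipschitz_on UNIV (S i)" using r by (intro lipschitz_onI) auto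
  then show ?thesis by (rule lipschitz_on_continuous_on)
qed


definition rat where "rat = (SOME r. 0 \<le> r \<and> r < 1 \<and> (\<forall>i\<in>{1..l}. \<forall>x y. dist (S i x) (S i y) \<le> r * dist x y))"

lemma rat: "0 \<le> rat" "rat < 1" "\<And>i x y. i\<in>{1..l} \<Longrightarrow> dist (S i x) (S i y) \<le> rat * dist x y"
  using someI_ex[OF ratio] unfolding rat_def[symmetric] by auto

lemma wc_lip: "x \<in> space M \<Longrightarrow> dist (word_comp S x n a) (word_comp S x n b) \<le> rat^n * dist a b"
proof (induction n arbitrary: a b)
  case 0 then show ?case by simp
next
  case (Suc n)
  have xn: "x n \<in> {1..l}" using Suc.prems by (auto simp: space_M)
  have "dist (word_comp S x (Suc n) a) (word_comp S x (Suc n) b)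
      = dist (word_comp S x n (S (x n) a)) (word_comp S x n (S (x n) b))" by simp
  also have "\<dots> \<le> rat^n * dist (S (x n) a) (S (x n) b)" using Suc by blast
  also have "\<dots> \<le> rat^n * (rat * dist a b)"
    using rat(3)[OF xn] rat(1) by (intro mult_left_mono) auto
  finally show ?case by (simp add: algebra_simps)
qed

definition Cb where "Cb = Max ((\<lambda>i. norm (S i 0)) ` {1..l})"

lemma conv: assumes x: "x \<in> space M" shows "(\<lambda>n. word_comp S x n 0) \<longlonglongrightarrow> cod x"
proof -
  define d where "d k = word_comp S x (Suc k) 0 - word_comp S x k 0" for k
  have nd: "norm (d k) \<le> rat^k * Cb" for k
  proof -
    have xk: "x k \<in> {1..l}" using x by (auto simp: space_M)
    have "norm (d k) = dist (word_comp S x k (S (x k) 0)) (word_comp S x k 0)"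
      by (simp add: d_def dist_norm)
    also have "\<dots> \<le> rat^k * dist (S (x k) 0) 0" by (rule wc_lip[OF x])
    also have "\<dots> \<le> rat^k * Cb"
      using rat(1) xk unfolding Cb_def by (intro mult_left_mono Max_ge) auto
    finally show ?thesis .
  qed
  have "summable (\<lambda>k. rat^k * Cb)" using rat by (intro summable_mult2 summable_geometric) auto
  then have "summable (\<lambda>k. norm (d k))" by (rule summable_comparison_test'[of _ 0]) (use nd in auto)
  then have "summable d" by (rule summable_norm_cancel)
  then have "(\<lambda>n. \<Sum>k<n. d k) \<longlonglongrightarrow> suminf d" by (rule summable_LIMSEQ)
  moreover have "(\<Sum>k<n. d k) = word_comp S x n 0" for n
    unfolding d_def by (subst sum_lessThan_telescope) simp
  ultimately have "(\<lambda>n. word_comp S x n 0) \<longlonglongrightarrow> suminf d" by simp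
  then show ?thesis unfolding coding_def by (simp add: limI)
qed

lemma S_meas: "i \<in> {1..l} \<Longrightarrow> S i \<in> borel_measurable borel"
  using S_cont by (simp add: borel_measurable_continuous_onI)

lemma wc_meas: "g \<in> borel_measurable M \<Longrightarrow> (\<lambda>x. word_comp S x n (g x)) \<in> borel_measurable M"
proof (induction n arbitrary: g)
  case 0 then show ?case by simp
next
  case (Suc n)
  have m1: "(\<lambda>x. \<Sum>i\<in>{1..l}. (if x n = i then 1 else 0) *\<^sub>R S i (g x)) \<in> borel_measurable M"
  proof (intro borel_measurable_sum borel_measurable_scaleR)
    fix i assume i: "i \<in> {1..l}"
    have cm: "(\<lambda>x. x n) \<in> measurable M L" unfolding M_def' by (rule measurable_component_singleton) simp
    have "(\<lambda>x. x n) -` {i} \<inter> space M \<in> sets M" using i by (intro measurable_sets[OF cm]) auto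
    then have "indicator ((\<lambda>x. x n) -` {i} \<inter> space M) \<in> borel_measurable M" by simp
    then show "(\<lambda>x. if x n = i then 1 else 0::real) \<in> borel_measurable M"
      by (rule measurable_cong[THEN iffD1, rotated]) (auto simp: indicator_def)
    show "(\<lambda>x. S i (g x)) \<in> borel_measurable M"
      using measurable_compose[OF Suc.prems S_meas[OF i]] by (simp add: comp_def)
  qed
  moreover have eq: "x \<in> space M \<Longrightarrow> (\<Sum>i\<in>{1..l}. (if x n = i then 1 else 0) *\<^sub>R S i (g x)) = S (x n) (g x)" for x
  proof -
    assume "x \<in> space M"
    then have xn: "x n \<in> {1..l}" by (auto simp: space_M)
    have "(\<Sum>i\<in>{1..l}. (if x n = i then 1 else 0) *\<^sub>R S i (g x)) = (\<Sum>i\<in>{1..l}. if x n = i then S i (g x) else 0)"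
      by (intro sum.cong) auto
    also have "\<dots> = S (x n) (g x)" using xn by (subst sum.delta') auto
    finally show ?thesis .
  qed
  have "(\<lambda>x. S (x n) (g x)) \<in> borel_measurable M"
    using m1 by (rule measurable_cong[THEN iffD1, rotated]) (rule eq)
  from Suc.IH[OF this] show ?case by simp
qed

lemma cod_meas: "cod \<in> borel_measurable M"
proof (rule borel_measurable_LIMSEQ_metric)
  show "(\<lambda>x. word_comp S x n 0) \<in> borel_measurable M" for n using wc_meas[of "\<lambda>_. 0" n] by simp
  show "x \<in> space M \<Longrightarrow> (\<lambda>n. word_comp S x n 0) \<longlonglongrightarrow> cod x" for x by (rule conv)
qed


lemma wc_cons: "word_comp S (case_nat i x) (Suc n) z = S i (word_comp S x n z)"
proof (induction n arbitrary: z)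
  case 0 then show ?case by simp
next
  case (Suc n)
  have "word_comp S (case_nat i x) (Suc (Suc n)) z = word_comp S (case_nat i x) (Suc n) (S (x n) z)"
    by (simp only: word_comp.simps(2)[of S "case_nat i x" "Suc n"] comp_def nat.case)
  also have "\<dots> = S i (word_comp S x n (S (x n) z))" by (rule Suc.IH)
  also have "\<dots> = S i (word_comp S x (Suc n) z)" by simp
  finally show ?case .
qed

lemma cons_space: "x \<in> space M \<Longrightarrow> i \<in> {1..l} \<Longrightarrow> case_nat i x \<in> space M"
  by (auto simp: space_M PiE_iff split: nat.split)

lemma cod_cons: assumes x: "x \<in> space M" and i: "i \<in> {1..l}"
  shows "cod (case_nat i x) = S i (cod x)"
proof -
  have "(\<lambda>n. word_comp S (case_nat i x) (Suc n) 0) \<longlonglongrightarrow> cod (case_nat i x)"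
    using conv[OF cons_space[OF x i]] by (rule LIMSEQ_Suc)
  moreover have "isCont (S i) (cod x)"
    using S_cont[OF i] by (simp add: continuous_on_eq_continuous_at)
  then have "(\<lambda>n. S i (word_comp S x n 0)) \<longlonglongrightarrow> S i (cod x)"
    using conv[OF x] by (rule isCont_tendsto_compose)
  moreover have "(\<lambda>n. word_comp S (case_nat i x) (Suc n) 0) = (\<lambda>n. S i (word_comp S x n 0))"
    by (rule ext) (rule wc_cons)
  ultimately show ?thesis using LIMSEQ_unique by metis
qed

lemma cyl_eq: "cyl l i = {x \<in> space M. x 0 = i}"
  by (simp add: cyl_def space_M)

lemma cyl_sets: "cyl l i \<in> sets M"
proof -
  have cm: "(\<lambda>x. x 0) \<in> measurable M L" unfolding M_def' by (rule measurable_component_singleton) simp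
  have "(\<lambda>x. x 0) -` ({i} \<inter> {1..l}) \<inter> space M \<in> sets M" by (intro measurable_sets[OF cm]) auto
  moreover have "(\<lambda>x. x 0) -` ({i} \<inter> {1..l}) \<inter> space M = cyl l i" by (auto simp: cyl_eq space_M)
  ultimately show ?thesis by simp
qed

lemma selfsim: assumes B: "B \<in> sets borel" and i: "i \<in> {1..l}"
  shows "measure M (cyl l i \<inter> cod -` B) = p i * measure M (cod -` (S i -` B) \<inter> space M)"
proof -
  let ?f = "\<lambda>(s, \<omega>). case_nat s \<omega>"
  have fm: "?f \<in> measurable (L \<Otimes>\<^sub>M M) M" unfolding M_def' by measurable
  have X: "cyl l i \<inter> cod -` B \<in> sets M"
  proof -
    have "cod -` B \<inter> space M \<in> sets M" using cod_meas B by (rule measurable_sets)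
    then have "cyl l i \<inter> (cod -` B \<inter> space M) \<in> sets M" using cyl_sets by blast
    moreover have "cyl l i \<inter> (cod -` B \<inter> space M) = cyl l i \<inter> cod -` B" by (auto simp: cyl_eq)
    ultimately show ?thesis by simp
  qed
  have SB: "S i -` B \<in> sets borel" using measurable_sets[OF S_meas[OF i] B] by simp
  have Y: "cod -` (S i -` B) \<inter> space M \<in> sets M" using cod_meas SB by (rule measurable_sets)
  have "measure M (cyl l i \<inter> cod -` B) = measure (distr (L \<Otimes>\<^sub>M M) M ?f) (cyl l i \<inter> cod -` B)"
    using seq.PiM_iter unfolding M_def' by simp
  also have "\<dots> = measure (L \<Otimes>\<^sub>M M) (?f -` (cyl l i \<inter> cod -` B) \<inter> space (L \<Otimes>\<^sub>M M))"
    using fm X by (rule measure_distr)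
  also have "?f -` (cyl l i \<inter> cod -` B) \<inter> space (L \<Otimes>\<^sub>M M) = {i} \<times> (cod -` (S i -` B) \<inter> space M)"
  proof -
    have *: "(s, \<omega>) \<in> ?f -` (cyl l i \<inter> cod -` B) \<inter> space (L \<Otimes>\<^sub>M M) \<longleftrightarrow> (s, \<omega>) \<in> {i} \<times> (cod -` (S i -` B) \<inter> space M)" for s \<omega>
    proof (cases "s = i \<and> \<omega> \<in> space M")
      case True
      then show ?thesis using cod_cons[of \<omega> i] i cons_space[of \<omega> i]
        by (auto simp: space_pair_measure cyl_eq)
    next
      case False
      then show ?thesis by (auto simp: space_pair_measure cyl_eq)
    qed
    show ?thesis
      apply (rule set_eqI)
      subgoal for z using *[of "fst z" "snd z"] by simp
      done
  qed
  also have "measure (L \<Otimes>\<^sub>M M) ({i} \<times> (cod -` (S i -` B) \<inter> space M)) = measure L {i} * measure M (cod -` (S i -` B) \<inter> space M)"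
  proof -
    interpret sf: sigma_finite_measure M using prob_M prob_space_imp_sigma_finite by blast
    show ?thesis unfolding measure_def using i Y
      by (subst sf.emeasure_pair_measure_Times) (auto simp: enn2real_mult)
  qed
  also have "measure L {i} = p i" using i p_pos[OF i] unfolding letter_measure_def
    by (subst measure_point_measure_finite_if) (auto intro: p_nonneg)
  finally show ?thesis .
qed

end


lemma phi_meas[measurable]: "phi \<in> borel_measurable borel"
  unfolding phi_def by measurable

lemma phi_01: "0 \<le> t \<Longrightarrow> t \<le> 1 \<Longrightarrow> 0 \<le> phi t \<and> phi t \<le> 1"
proof -
  assume t: "0 \<le> t" "t \<le> 1"
  show ?thesis
  proof (cases "t = 0")
    case True then show ?thesis by (simp add: phi_def)
  next
    case False
    then have tp: "t > 0" using t by auto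
    have "ln t \<le> 0" using t tp by simp
    then have a: "0 \<le> - t * ln t" using tp by (simp add: mult_nonneg_nonpos)
    have "ln (1/t) \<le> 1/t - 1" using tp by (intro ln_le_minus_one) auto
    then have "- ln t \<le> 1/t - 1" using tp by (simp add: ln_div)
    then have "t * (- ln t) \<le> t * (1/t - 1)" using tp by (intro mult_left_mono) auto
    also have "\<dots> = 1 - t" using tp by (simp add: field_simps)
    finally have "- t * ln t \<le> 1" using t by simp
    then show ?thesis using a False by (simp add: phi_def)
  qed
qed

lemma phi_tangent: "0 \<le> t \<Longrightarrow> 0 < c \<Longrightarrow> phi t \<le> c - t - t * ln c"
proof -
  assume t: "0 \<le> t" and c: "0 < c"
  show ?thesis
  proof (cases "t = 0")
    case True then show ?thesis using c by (simp add: phi_def)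
  next
    case False
    then have tp: "t > 0" using t by auto
    have "ln (c/t) \<le> c/t - 1" using tp c by (intro ln_le_minus_one) auto
    then have "t * ln (c/t) \<le> t * (c/t - 1)" using tp by (intro mult_left_mono) auto
    moreover have "ln (c/t) = ln c - ln t" using tp c by (simp add: ln_div)
    moreover have "t * (c/t - 1) = c - t" using tp by (simp add: field_simps)
    ultimately have "t * ln c - t * ln t \<le> c - t" by (simp add: right_diff_distrib)
    then show ?thesis using False by (simp add: phi_def)
  qed
qed

lemma cond_bound:
  fixes M F :: "'b measure" and A :: "'b set" and B :: "nat \<Rightarrow> 'b set" and n :: nat
  assumes P: "prob_space M" and sub: "subalgebra M F" and A: "A \<in> sets M"
    and Bs: "\<And>j. j < n \<Longrightarrow> B j \<in> sets F"
    and disj: "disjoint_family_on B {..<n}" and cov: "(\<Union>j<n. B j) = space M"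
  shows "(\<integral>x. phi (real_cond_exp M F (indicator A) x) \<partial>M)
     \<le> (\<Sum>j<n. measure M (B j) * phi (measure M (A \<inter> B j) / measure M (B j)))"
proof -
  interpret prob_space M by (rule P)
  interpret finite_measure_subalgebra M F by unfold_locales (rule sub)
  define h where "h = real_cond_exp M F (indicator A)"
  have intA: "integrable M (indicator A :: 'b \<Rightarrow> real)" using A by (intro integrable_real_indicator) (auto simp: less_top[symmetric])
  have hm[measurable]: "h \<in> borel_measurable M" unfolding h_def by simp
  have hint: "integrable M h" unfolding h_def using intA by (rule real_cond_exp_int(1))
  have h0: "AE x in M. 0 \<le> h x" unfolding h_def using A by (intro real_cond_exp_pos) auto
  have h1: "AE x in M. h x \<le> 1" unfolding h_def by (rule real_cond_exp_le_c) (auto simp: intA)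
  have BM: "j < n \<Longrightarrow> B j \<in> sets M" for j using Bs sub by (auto simp: subalgebra_def)
  have phint: "integrable M (\<lambda>x. phi (h x))"
  proof (rule integrable_const_bound[where B=1])
    show "AE x in M. norm (phi (h x)) \<le> 1" using h0 h1 by eventually_elim (use phi_01 in auto)
  qed simp
  have key: "(\<integral>x. indicator (B j) x * phi (h x) \<partial>M) \<le> measure M (B j) * phi (measure M (A \<inter> B j) / measure M (B j))"
    if j: "j < n" for j
  proof -
    let ?mu = "measure M (B j)" and ?a = "measure M (A \<inter> B j)"
    have Bj: "B j \<in> sets M" using BM j .
    have ia: "(\<integral>x. indicator (B j) x * h x \<partial>M) = ?a"
    proof -
      have "(\<integral>x \<in> B j. indicator A x \<partial>M) = (\<integral>x \<in> B j. h x \<partial>M)"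
        unfolding h_def using intA Bs[OF j] by (rule real_cond_exp_intA)
      moreover have "(\<integral>x \<in> B j. indicator A x \<partial>M) = ?a"
        using A Bj by (simp add: set_lebesgue_integral_def Int_commute indicator_inter_arith[symmetric])
      ultimately show ?thesis by (simp add: set_lebesgue_integral_def)
    qed
    have bnd: "(\<integral>x. indicator (B j) x * phi (h x) \<partial>M) \<le> c * ?mu - (1 + ln c) * ?a" if c: "c > 0" for c
    proof -
      have "(\<integral>x. indicator (B j) x * phi (h x) \<partial>M) \<le> (\<integral>x. indicator (B j) x * (c - h x - h x * ln c) \<partial>M)"
      proof (rule integral_mono_AE)
        show "integrable M (\<lambda>x. indicator (B j) x * phi (h x))"
          using phint Bj by (intro integrable_mult_indicator[where 'b=real, simplified]) auto
        show "integrable M (\<lambda>x. indicator (B j) x * (c - h x - h x * ln c))"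
          using hint Bj by (intro integrable_mult_indicator[where 'b=real, simplified]) auto
        show "AE x in M. indicator (B j) x * phi (h x) \<le> indicator (B j) x * (c - h x - h x * ln c)"
          using h0 by eventually_elim (auto simp: indicator_def intro: phi_tangent c)
      qed
      also have "\<dots> = c * ?mu - (1 + ln c) * ?a"
      proof -
        have "(\<lambda>x. indicator (B j) x * (c - h x - h x * ln c)) = (\<lambda>x. c * indicator (B j) x - (1 + ln c) * (indicator (B j) x * h x))"
          by (auto simp: algebra_simps)
        moreover have "integrable M (\<lambda>x. indicator (B j) x * h x)"
          using hint Bj by (intro integrable_mult_indicator[where 'b=real, simplified]) auto
        moreover have "integrable M (\<lambda>x. c * indicat_real (B j) x)"
          using Bj by (intro integrable_mult_right integrable_real_indicator) (auto simp: less_top[symmetric])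
        ultimately show ?thesis using Bj ia
          by (simp add: integral_diff integrable_mult_right integral_mult_right_zero del: integral_mult_right)
      qed
      finally show ?thesis .
    qed
    show ?thesis
    proof (cases "?a = 0")
      case True
      show ?thesis
      proof (rule ccontr)
        assume "\<not> ?thesis"
        then have X: "(\<integral>x. indicator (B j) x * phi (h x) \<partial>M) > 0" using True by (simp add: phi_def)
        define X where "X = (\<integral>x. indicator (B j) x * phi (h x) \<partial>M)"
        have mu1: "?mu \<le> 1" by simp
        have "X \<le> (X/2) * ?mu" using bnd[of "X/2"] X True unfolding X_def by simp
        also have "\<dots> \<le> X/2" using mu1 X unfolding X_def by (intro mult_left_le) auto
        finally show False using X unfolding X_def by simp
      qed
    next
      case False
      have "?a \<le> ?mu" using A Bj by (intro finite_measure_mono) auto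
      moreover have "?a \<ge> 0" by simp
      ultimately have pos: "?a > 0" "?mu > 0" using False by linarith+
      have "(\<integral>x. indicator (B j) x * phi (h x) \<partial>M) \<le> (?a/?mu) * ?mu - (1 + ln (?a/?mu)) * ?a"
        using pos by (intro bnd) auto
      also have "\<dots> = ?mu * phi (?a / ?mu)"
        using pos by (simp add: phi_def field_simps)
      finally show ?thesis .
    qed
  qed
  have "(\<integral>x. phi (h x) \<partial>M) = (\<integral>x. (\<Sum>j<n. indicator (B j) x * phi (h x)) \<partial>M)"
  proof (rule Bochner_Integration.integral_cong[OF refl])
    fix x assume x: "x \<in> space M"
    then obtain j where j: "j < n" "x \<in> B j" using cov by auto
    have "(\<Sum>k<n. indicator (B k) x * phi (h x)) = (\<Sum>k<n. if k = j then phi (h x) else 0)"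
    proof (rule sum.cong)
      fix k assume "k \<in> {..<n}"
      then show "indicator (B k) x * phi (h x) = (if k = j then phi (h x) else 0)"
        using disj j unfolding disjoint_family_on_def by (auto simp: indicator_def)
    qed simp
    also have "\<dots> = phi (h x)" using j by simp
    finally show "phi (h x) = (\<Sum>k<n. indicator (B k) x * phi (h x))" by simp
  qed
  also have "\<dots> = (\<Sum>j<n. (\<integral>x. indicator (B j) x * phi (h x) \<partial>M))"
  proof (rule Bochner_Integration.integral_sum)
    fix j assume "j \<in> {..<n}"
    then show "integrable M (\<lambda>x. indicator (B j) x * phi (h x))"
      using phint BM by (intro integrable_mult_indicator[where 'b=real, simplified]) auto
  qed
  also have "\<dots> \<le> (\<Sum>j<n. measure M (B j) * phi (measure M (A \<inter> B j) / measure M (B j)))"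
    using key by (intro sum_mono) auto
  finally show ?thesis unfolding h_def .
qed



lemma fent_alt: assumes "(\<Sum>i\<in>{1..l}. x i) \<noteq> 0"
  shows "fent l x = (\<Sum>i\<in>{1..l}. (\<Sum>j\<in>{1..l}. x j) * phi (x i / (\<Sum>j\<in>{1..l}. x j)))"
proof -
  have "\<not> (\<forall>i\<in>{1..l}. x i = 0)" using assms sum.neutral by blast
  then show ?thesis unfolding fent_def Let_def by (simp add: sum_distrib_left)
qed

lemma phi_scaled_nonneg: "0 \<le> y \<Longrightarrow> y \<le> s \<Longrightarrow> 0 < s \<Longrightarrow> 0 \<le> s * phi (y / s)"
  using phi_01[of "y/s"] by (simp add: field_simps)

lemma term_bound:
  fixes x y s s' :: real
  assumes x: "0 \<le> x" "x \<le> y" and y: "y \<le> s'" and s: "0 < s" "s \<le> s'"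
  shows "s * phi (x / s) \<le> s' * phi (y / s') + s * y / s' - x"
proof (cases "x = 0")
  case True
  have "0 \<le> s' * phi (y / s')" using x y s by (intro phi_scaled_nonneg) auto
  moreover have "0 \<le> s * y / s'" using x s by auto
  ultimately show ?thesis using True by (simp add: phi_def)
next
  case False
  then have xp: "x > 0" using x by auto
  then have yp: "y > 0" using x by auto
  have s'p: "s' > 0" using s by auto
  have "phi (x/s) \<le> y/s' - x/s - x/s * ln (y/s')"
    using xp yp s s'p by (intro phi_tangent) auto
  then have "s * phi (x/s) \<le> s * (y/s' - x/s - x/s * ln (y/s'))"
    using s by (intro mult_left_mono) auto
  also have "\<dots> = s * y / s' - x - x * ln (y/s')" using s by (simp add: field_simps)
  also have "- x * ln (y/s') \<le> - y * ln (y/s')"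
  proof -
    have "ln (y/s') \<le> 0" using yp s'p y by (simp add: divide_le_eq_1)
    then show ?thesis using x by (simp add: mult_right_mono_neg)
  qed
  then have "s * y / s' - x - x * ln (y/s') \<le> s * y / s' - x + s' * phi (y/s')"
    using yp s'p by (simp add: phi_def)
  finally show ?thesis by simp
qed

lemma fent_nonneg: assumes "\<And>i. i \<in> {1..l} \<Longrightarrow> 0 \<le> y i" shows "0 \<le> fent l y"
proof (cases "\<forall>i\<in>{1..l}. y i = 0")
  case True then show ?thesis by (simp add: fent_def)
next
  case False
  let ?s = "\<Sum>j\<in>{1..l}. y j"
  obtain k where k: "k \<in> {1..l}" "y k \<noteq> 0" using False by auto
  have "y k \<le> ?s" using assms k by (intro member_le_sum) auto
  then have sp: "?s > 0" using k assms[of k] by auto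
  have "0 \<le> (\<Sum>i\<in>{1..l}. ?s * phi (y i / ?s))"
  proof (rule sum_nonneg)
    fix i assume i: "i \<in> {1..l}"
    have "y i \<le> ?s" using assms i by (intro member_le_sum) auto
    then show "0 \<le> ?s * phi (y i / ?s)" using assms[OF i] sp by (intro phi_scaled_nonneg) auto
  qed
  then show ?thesis using sp by (subst fent_alt) auto
qed

lemma fent_mono:
  assumes "\<And>i. i \<in> {1..l} \<Longrightarrow> 0 \<le> x i \<and> x i \<le> y i"
  shows "fent l x \<le> fent l y"
proof (cases "\<forall>i\<in>{1..l}. x i = 0")
  case True
  then have "fent l x = 0" by (simp add: fent_def)
  moreover have "0 \<le> fent l y" using assms by (intro fent_nonneg) (meson order_trans)
  ultimately show ?thesis by simp
next
  case False
  let ?s = "\<Sum>j\<in>{1..l}. x j" and ?s' = "\<Sum>j\<in>{1..l}. y j"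
  obtain k where k: "k \<in> {1..l}" "x k \<noteq> 0" using False by auto
  have "x k \<le> ?s" using assms k by (intro member_le_sum) auto
  then have sp: "?s > 0" using k assms[of k] by auto
  have ss: "?s \<le> ?s'" using assms by (intro sum_mono) auto
  have yle: "y i \<le> ?s'" if "i \<in> {1..l}" for i
    using assms that by (intro member_le_sum) (auto intro: order_trans)
  have "fent l x = (\<Sum>i\<in>{1..l}. ?s * phi (x i / ?s))" using sp by (subst fent_alt) auto
  also have "\<dots> \<le> (\<Sum>i\<in>{1..l}. ?s' * phi (y i / ?s') + ?s * y i / ?s' - x i)"
    using assms yle sp ss by (intro sum_mono term_bound) auto
  also have "\<dots> = (\<Sum>i\<in>{1..l}. ?s' * phi (y i / ?s')) + ?s * ?s' / ?s' - ?s"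
    by (simp add: sum.distrib sum_subtractf sum_divide_distrib[symmetric] sum_distrib_left)
  also have "\<dots> = (\<Sum>i\<in>{1..l}. ?s' * phi (y i / ?s'))" using sp ss by simp
  also have "\<dots> = fent l y" using sp ss by (subst fent_alt) auto
  finally show ?thesis .
qed



context ifs
begin

lemma main_gen:
  fixes DD :: "'a set set" and y :: "nat \<Rightarrow> 'a set \<Rightarrow> real" and N :: "'a measure"
  assumes part: "finite_borel_partition (ifs_measure l p S) DD"
    and y_nonneg: "\<And>i D. i \<in> {1..l} \<Longrightarrow> D \<in> DD \<Longrightarrow> y i D \<ge> 0"
    and y_bound: "\<And>i D. i \<in> {1..l} \<Longrightarrow> D \<in> DD \<Longrightarrow>
                    p i * measure (ifs_measure l p S) (S i -` D) \<le> y i D"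
    and Nsp: "space N = UNIV" and Nb: "sets N \<subseteq> sets borel" and DN: "DD \<subseteq> sets N"
  shows "cond_entropy M (cyl l ` {1..l}) (vimage_algebra (space M) cod N) \<le> (\<Sum>D\<in>DD. fent l (\<lambda>i. y i D))"
proof -
  let ?F = "vimage_algebra (space M) cod N"
  have finDD: "finite DD" using part by (simp add: finite_borel_partition_def)
  obtain ds where ds: "set ds = DD" "distinct ds" using finite_distinct_list[OF finDD] by blast
  define k where "k = length ds"
  define E where "E j = (if j < k then ds!j - \<Union>(set (take j ds)) else UNIV - \<Union>DD)" for j
  define B where "B j = cod -` E j \<inter> space M" for j
  have EN: "E j \<in> sets N" for j
  proof (cases "j < k")
    case True
    have "ds!j \<in> sets N" using True DN ds unfolding k_def by auto
    moreover have "\<Union>(set (take j ds)) \<in> sets N"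
      using DN ds by (intro sets.finite_Union) (auto dest: in_set_takeD)
    ultimately show ?thesis using True unfolding E_def by auto
  next
    case False
    have "\<Union>DD \<in> sets N" using DN finDD by (intro sets.finite_Union) auto
    then have "space N - \<Union>DD \<in> sets N" by auto
    then show ?thesis using False Nsp unfolding E_def by auto
  qed
  have Eb: "E j \<in> sets borel" for j using EN Nb by auto
  have Ej_sub: "E j \<subseteq> ds!j" if "j < k" for j using that unfolding E_def by auto
  have cod_in: "cod \<in> space M \<rightarrow> space N" using Nsp by auto
  have sub: "subalgebra M ?F"
    unfolding subalgebra_def
  proof
    show "space ?F = space M" by simp
    show "sets ?F \<subseteq> sets M"
    proof
      fix X assume "X \<in> sets ?F"
      then obtain A where "X = cod -` A \<inter> space M" "A \<in> sets N"
        unfolding sets_vimage_algebra2[OF cod_in] by auto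
      then show "X \<in> sets M" using Nb cod_meas by (auto intro: measurable_sets)
    qed
  qed
  have BF: "B j \<in> sets ?F" for j unfolding B_def using EN by (rule in_vimage_algebra)
  have BM: "B j \<in> sets M" for j unfolding B_def using cod_meas Eb by (rule measurable_sets)
  have disjE: "disjoint_family_on E {..<Suc k}"
    unfolding disjoint_family_on_def
  proof (intro ballI impI)
    fix a b assume a: "a \<in> {..<Suc k}" and b: "b \<in> {..<Suc k}" and ab: "a \<noteq> b"
    show "E a \<inter> E b = {}"
    proof (cases "a < b")
      case True
      then have "a < k" using b by auto
      then have "E a \<subseteq> ds!a" by (rule Ej_sub)
      moreover have "ds!a \<in> set (take b ds)" if "b < k"
        using True that \<open>a < k\<close> unfolding k_def by (simp add: in_set_conv_nth) (metis nth_take)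
      moreover have "ds!a \<in> DD" using \<open>a < k\<close> ds unfolding k_def by auto
      ultimately show ?thesis using \<open>a < k\<close> unfolding E_def by auto
    next
      case False
      then have "b < a" using ab by auto
      then have "b < k" using a by auto
      then have "E b \<subseteq> ds!b" by (rule Ej_sub)
      moreover have "ds!b \<in> set (take a ds)" if "a < k"
        using \<open>b < a\<close> that \<open>b < k\<close> unfolding k_def by (simp add: in_set_conv_nth) (metis nth_take)
      moreover have "ds!b \<in> DD" using \<open>b < k\<close> ds unfolding k_def by auto
      ultimately show ?thesis using \<open>b < k\<close> unfolding E_def by auto
    qed
  qed
  have covE: "(\<Union>j<Suc k. E j) = UNIV"
  proof -
    have "z \<in> (\<Union>j<Suc k. E j)" for z
    proof (cases "z \<in> \<Union>DD")
      case False
      then show ?thesis unfolding E_def by (intro UN_I[of k]) auto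
    next
      case True
      then have "\<exists>j<k. z \<in> ds!j" using ds unfolding k_def by (auto simp: in_set_conv_nth)
      then obtain j where j: "j < k" "z \<in> ds!j" "\<forall>j'<j. z \<notin> ds!j'"
        using exists_least_iff[of "\<lambda>j. j < k \<and> z \<in> ds!j"] by (metis order.strict_trans)
      have "z \<notin> \<Union>(set (take j ds))"
        using j unfolding k_def by (auto simp: in_set_conv_nth)
      then have "z \<in> E j" using j unfolding E_def by auto
      then show ?thesis using j by auto
    qed
    then show ?thesis by auto
  qed
  have disjB: "disjoint_family_on B {..<Suc k}"
    using disjE unfolding disjoint_family_on_def B_def by auto
  have covB: "(\<Union>j<Suc k. B j) = space M"
  proof -
    have "cod x \<in> (\<Union>j<Suc k. E j)" for x using covE by simp
    then show ?thesis unfolding B_def by blast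
  qed
  define R where "R = (\<Sum>i\<in>{1..l}. \<Sum>j<Suc k. measure M (B j) * phi (measure M (cyl l i \<inter> B j) / measure M (B j)))"
  have "cond_entropy M (cyl l ` {1..l}) ?F = (\<Sum>i\<in>{1..l}. \<integral>x. phi (real_cond_exp M ?F (indicator (cyl l i)) x) \<partial>M)"
  proof -
    have "inj_on (cyl l) {1..l}"
    proof
      fix i i' assume "i \<in> {1..l}" "i' \<in> {1..l}" "cyl l i = cyl l i'"
      moreover have "(\<lambda>_. i) \<in> cyl l i" using \<open>i \<in> {1..l}\<close> by (auto simp: cyl_def)
      ultimately show "i = i'" by (auto simp: cyl_def)
    qed
    then show ?thesis unfolding cond_entropy_def by (simp add: sum.reindex)
  qed
  also have "\<dots> \<le> R" unfolding R_def
    using prob_M sub cyl_sets BF disjB covB by (intro sum_mono cond_bound) auto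
  also have "R \<le> (\<Sum>D\<in>DD. fent l (\<lambda>i. y i D))"
  proof -
    have "R = (\<Sum>j<Suc k. \<Sum>i\<in>{1..l}. measure M (B j) * phi (measure M (cyl l i \<inter> B j) / measure M (B j)))"
      unfolding R_def by (rule sum.swap)
    also have "\<dots> = (\<Sum>j<k. \<Sum>i\<in>{1..l}. measure M (B j) * phi (measure M (cyl l i \<inter> B j) / measure M (B j)))"
    proof -
      have "measure M (B k) = measure (ifs_measure l p S) (UNIV - \<Union>DD)"
        unfolding ifs_measure_def B_def E_def using cod_meas Eb[of k]
        by (subst measure_distr) (auto simp: E_def)
      also have "\<dots> = 0" using part by (simp add: finite_borel_partition_def ifs_measure_def)
      finally show ?thesis by simp
    qed
    also have "\<dots> \<le> (\<Sum>j<k. fent l (\<lambda>i. y i (ds!j)))"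
    proof (rule sum_mono)
      fix j assume "j \<in> {..<k}"
      then have j: "j < k" by simp
      let ?D = "ds!j"
      have D: "?D \<in> DD" using j ds unfolding k_def by auto
      have Db: "?D \<in> sets borel" using D DN Nb by auto
      let ?mu = "measure M (B j)"
      let ?nu = "\<lambda>i. measure M (cyl l i \<inter> B j)"
      have sumnu: "(\<Sum>i\<in>{1..l}. ?nu i) = ?mu"
      proof -
        have "(\<Union>i\<in>{1..l}. cyl l i \<inter> B j) = B j"
          unfolding B_def cyl_eq by (auto simp: space_M)
        moreover have "measure M (\<Union>i\<in>{1..l}. cyl l i \<inter> B j) = (\<Sum>i\<in>{1..l}. ?nu i)"
        proof (rule measure_finite_Union)
          show "disjoint_family_on (\<lambda>i. cyl l i \<inter> B j) {1..l}"
            unfolding disjoint_family_on_def cyl_eq by auto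
          show "(\<lambda>i. cyl l i \<inter> B j) ` {1..l} \<subseteq> sets M" using cyl_sets BM by auto
          show "emeasure M (cyl l i \<inter> B j) \<noteq> \<infinity>" for i
            using prob_M by (simp add: prob_space_def finite_measure.emeasure_finite)
        qed simp
        ultimately show ?thesis by simp
      qed
      have nub: "0 \<le> ?nu i \<and> ?nu i \<le> y i ?D" if i: "i \<in> {1..l}" for i
      proof -
        have "?nu i \<le> measure M (cyl l i \<inter> cod -` ?D)"
        proof (rule finite_measure.finite_measure_mono)
          show "finite_measure M" using prob_M by (simp add: prob_space_def)
          show "cyl l i \<inter> B j \<subseteq> cyl l i \<inter> cod -` ?D" using Ej_sub[OF j] unfolding B_def by auto
          have "cod -` ?D \<inter> space M \<in> sets M" using cod_meas Db by (rule measurable_sets)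
          moreover have "cyl l i \<inter> cod -` ?D = cyl l i \<inter> (cod -` ?D \<inter> space M)" by (auto simp: cyl_eq)
          ultimately show "cyl l i \<inter> cod -` ?D \<in> sets M" using cyl_sets by auto
        qed
        also have "\<dots> = p i * measure M (cod -` (S i -` ?D) \<inter> space M)" using Db i by (rule selfsim)
        also have "\<dots> = p i * measure (ifs_measure l p S) (S i -` ?D)"
        proof -
          have "S i -` ?D \<in> sets borel" using measurable_sets[OF S_meas[OF i] Db] by simp
          then show ?thesis unfolding ifs_measure_def using cod_meas by (subst measure_distr) auto
        qed
        also have "\<dots> \<le> y i ?D" using y_bound i D by blast
        finally show ?thesis by simp
      qed
      show "(\<Sum>i\<in>{1..l}. ?mu * phi (?nu i / ?mu)) \<le> fent l (\<lambda>i. y i ?D)"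
      proof (cases "?mu = 0")
        case True
        have "0 \<le> fent l (\<lambda>i. y i ?D)" using y_nonneg D by (intro fent_nonneg) blast
        then show ?thesis using True by simp
      next
        case False
        have "(\<Sum>i\<in>{1..l}. ?mu * phi (?nu i / ?mu)) = fent l ?nu"
          using False sumnu by (subst fent_alt) auto
        also have "\<dots> \<le> fent l (\<lambda>i. y i ?D)" using nub by (intro fent_mono) auto
        finally show ?thesis .
      qed
    qed
    also have "\<dots> = (\<Sum>D\<in>DD. fent l (\<lambda>i. y i D))"
    proof -
      have "bij_betw (nth ds) {..<k} DD" using ds unfolding k_def by (intro bij_betw_nth) auto
      then show ?thesis by (rule sum.reindex_bij_betw)
    qed
    finally show ?thesis .
  qed
  finally show ?thesis .
qed

end

theorem corollary3p6:
  fixes l :: nat and p :: "nat \<Rightarrow> real" and S :: "nat \<Rightarrow> 'a::euclidean_space \<Rightarrow> 'a"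
    and DD :: "'a set set" and y :: "nat \<Rightarrow> 'a set \<Rightarrow> real"
  assumes contr: "\<And>i. i \<in> {1..l} \<Longrightarrow> contraction (S i)"
    and p_pos: "\<And>i. i \<in> {1..l} \<Longrightarrow> p i > 0"
    and p_sum: "(\<Sum>i\<in>{1..l}. p i) = 1"
    and part: "finite_borel_partition (ifs_measure l p S) DD"
    and y_nonneg: "\<And>i D. i \<in> {1..l} \<Longrightarrow> D \<in> DD \<Longrightarrow> y i D \<ge> 0"
    and y_bound: "\<And>i D. i \<in> {1..l} \<Longrightarrow> D \<in> DD \<Longrightarrow>
                    p i * measure (ifs_measure l p S) (S i -` D) \<le> y i D"
  shows "cond_entropy (bernoulli_measure l p) (cyl l ` {1..l})
           (vimage_algebra (space (bernoulli_measure l p)) (coding S) (sigma UNIV DD))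
         \<le> (\<Sum>D\<in>DD. fent l (\<lambda>i. y i D)) \<and>
         cond_entropy (bernoulli_measure l p) (cyl l ` {1..l})
           (vimage_algebra (space (bernoulli_measure l p)) (coding S) borel)
         \<le> (\<Sum>D\<in>DD. fent l (\<lambda>i. y i D))"
proof -
  interpret ifs l p S using contr p_pos p_sum by unfold_locales auto
  have DDb: "DD \<subseteq> sets borel" using part by (simp add: finite_borel_partition_def)
  have s1: "sets (sigma UNIV DD) = sigma_sets UNIV DD" by (rule sets_measure_of) auto
  show ?thesis
  proof
    show "cond_entropy M (cyl l ` {1..l}) (vimage_algebra (space M) cod (sigma UNIV DD)) \<le> (\<Sum>D\<in>DD. fent l (\<lambda>i. y i D))"
    proof (rule main_gen[OF part y_nonneg y_bound])
      show "space (sigma UNIV DD) = UNIV" by simp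
      show "sets (sigma UNIV DD) \<subseteq> sets borel"
        unfolding s1 using DDb by (metis sets.sigma_sets_subset space_borel)
      show "DD \<subseteq> sets (sigma UNIV DD)" unfolding s1 by auto
    qed auto
    show "cond_entropy M (cyl l ` {1..l}) (vimage_algebra (space M) cod borel) \<le> (\<Sum>D\<in>DD. fent l (\<lambda>i. y i D))"
      by (rule main_gen[OF part y_nonneg y_bound]) (use DDb in auto)
  qed
qed

end
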